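(* Let $N\ge2$, $h=\pi/N$, $x_j=-\cos(jh)$ for $0\le j\le N$ (Chebyshev–Gauss–Lobatto points), and for $1\le j\le N-1$ let $B_j\in\mathbb{P}_N$ be the unique polynomial with $B_j(\pm1)=0$ and $B_j''(x_i)=\delta_{ij}$ for $1\le i\le N-1$. Then $$B_j(x)=\sum_{k=0}^{N-2}\beta_{kj}\Big\{\partial_x^{-2}T_k(x)-\frac{1+x}{2}\,\partial_x^{-2}T_k(1)\Big\},\qquad B_j'(x)=\sum_{k=0}^{N-2}\beta_{kj}\Big\{\partial_x^{-1}T_k(x)-\frac{\partial_x^{-2}T_k(1)}{2}\Big\},$$ where $$\beta_{kj}=\frac{2}{c_kN}\Big\{T_k(x_j)-\frac{1-(-1)^{N+k}}{2}T_{N-1}(x_j)-\frac{1+(-1)^{N+k}}{2}T_N(x_j)\Big\},$$ with $c_0=2$ and $c_k=1$ for $k\ge1$.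
   Context: $T_k(x)=\cos(k\arccos x)$ is the Chebyshev polynomial of degree $k$. $\mathbb{P}_N$ is the space of polynomials of degree at most $N$. $\partial_x^{-1}u(x)=\int_{-1}^x u(t)\,dt$ and $\partial_x^{-2}u=\partial_x^{-1}(\partial_x^{-1}u)$. *)

theory Defs
  imports "HOL-Analysis.Analysis" "HOL-Computational_Algebra.Polynomial"
begin

definition cheb :: "nat \<Rightarrow> real \<Rightarrow> real" where
  "cheb k x = cos (real k * arccos x)"

definition cheb_int1 :: "nat \<Rightarrow> real \<Rightarrow> real" where
  "cheb_int1 k x = integral {-1..x} (cheb k)"

definition cheb_int2 :: "nat \<Rightarrow> real \<Rightarrow> real" where
  "cheb_int2 k x = integral {-1..x} (cheb_int1 k)"

definition cgl_node :: "nat \<Rightarrow> nat \<Rightarrow> real" where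
  "cgl_node N j = - cos (real j * pi / real N)"

definition cheb_c :: "nat \<Rightarrow> real" where
  "cheb_c k = (if k = 0 then 2 else 1)"

definition beta_coef :: "nat \<Rightarrow> nat \<Rightarrow> nat \<Rightarrow> real" where
  "beta_coef N k j = 2 / (cheb_c k * real N) *
     (cheb k (cgl_node N j)
      - (1 - (-1) ^ (N + k)) / 2 * cheb (N - 1) (cgl_node N j)
      - (1 + (-1) ^ (N + k)) / 2 * cheb N (cgl_node N j))"

end

theory Submission
  imports Defs
begin


lemma tele: "2 * sin (\<alpha>/2) * (\<Sum>k<n. cos (real k * \<alpha>)) = sin ((real n - 1/2) * \<alpha>) + sin (\<alpha>/2)"
proof (induction n)
  case 0
  have "(real 0 - 1/2) * \<alpha> = -(\<alpha>/2)" by simp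
  then show ?case by (simp only: sin_minus) simp
next
  case (Suc n)
  have e: "2 * sin (\<alpha>/2) * cos (real n * \<alpha>) = sin ((real n + 1/2) * \<alpha>) - sin ((real n - 1/2) * \<alpha>)"
  proof -
    have "(real n + 1/2) * \<alpha> = real n * \<alpha> + \<alpha>/2" "(real n - 1/2) * \<alpha> = real n * \<alpha> - \<alpha>/2"
      by (simp_all add: algebra_simps)
    then show ?thesis by (simp add: sin_add sin_diff)
  qed
  show ?case using Suc e by (simp add: algebra_simps)
qed

lemma sin_int_pi: "sin (real_of_int m * pi) = 0"
  by (simp add: sin_zero_iff_int2)

lemma cos_int_pi: "cos (real_of_int m * pi) = (if even m then 1 else -1)"
proof -
  have "cos (real_of_int m * pi) = cos (\<bar>real_of_int m * pi\<bar>)" by simp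
  also have "\<bar>real_of_int m * pi\<bar> = real (nat \<bar>m\<bar>) * pi" by (simp add: abs_mult)
  also have "cos (real (nat \<bar>m\<bar>) * pi) = (-1) ^ nat \<bar>m\<bar>" by (rule cos_npi)
  also have "\<dots> = (if even m then 1 else -1)" by (simp add: even_nat_iff)
  finally show ?thesis .
qed

lemma L1:
  fixes N :: nat and m :: int
  assumes "N > 0" "\<not> (2 * int N) dvd m"
  shows "(\<Sum>k<N. cos (real k * (real_of_int m * pi / real N))) = (if even m then 0 else 1)"
proof -
  define \<alpha> where "\<alpha> = real_of_int m * pi / real N"
  have s: "sin (\<alpha>/2) \<noteq> 0"
  proof
    assume "sin (\<alpha>/2) = 0"
    then obtain i where i: "\<alpha>/2 = real_of_int i * pi" by (auto simp: sin_zero_iff_int2)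
    then have "real_of_int m = real_of_int (2 * int N * i)"
      using assms(1) unfolding \<alpha>_def by (simp add: field_simps)
    then have "m = 2 * int N * i" by linarith
    then show False using assms(2) by simp
  qed
  have "(real N - 1/2) * \<alpha> = real_of_int m * pi - \<alpha>/2"
    using assms(1) unfolding \<alpha>_def by (simp add: field_simps)
  then have "sin ((real N - 1/2) * \<alpha>) = - (if even m then 1 else -1) * sin (\<alpha>/2)"
    by (simp add: sin_diff sin_int_pi cos_int_pi)
  with tele[of \<alpha> N] s have "2 * sin (\<alpha>/2) * (\<Sum>k<N. cos (real k * \<alpha>)) = 2 * sin (\<alpha>/2) * (if even m then 0 else 1)"
    by auto
  with s show ?thesis unfolding \<alpha>_def by simp
qed

lemma dvd_small:
  fixes m :: int assumes "0 < m" "m < 2 * int N" shows "\<not> (2 * int N) dvd m"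
proof
  assume "2 * int N dvd m"
  then have "2 * int N \<le> m" using zdvd_imp_le assms(1) by blast
  with assms(2) show False by simp
qed

lemma L1n:
  fixes N m :: nat
  assumes "0 < m" "m < 2 * N"
  shows "(\<Sum>k<N. cos (real k * (real m * pi / real N))) = (if even m then 0 else 1)"
proof -
  have N: "N > 0" using assms by simp
  have d: "\<not> (2 * int N) dvd int m" by (rule dvd_small) (use assms in simp_all)
  have "(\<Sum>k<N. cos (real k * (real_of_int (int m) * pi / real N))) = (if even (int m) then 0 else 1)"
    by (rule L1[OF N d])
  then show ?thesis by simp
qed

lemma L2:
  fixes N a b :: nat
  assumes "1 \<le> a" "a \<le> N - 1" "1 \<le> b" "b \<le> N - 1"
  shows "(\<Sum>k<N. cos (real k * (real a * pi / real N)) * cos (real k * (real b * pi / real N)))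
    = (if a = b then real N / 2 else 0) + (if even (a + b) then 0 else 1)"
proof -
  have N: "N > 0" using assms by auto
  define d where "d = (if a \<le> b then b - a else a - b)"
  have pt: "cos (real k * (real a * pi / real N)) * cos (real k * (real b * pi / real N))
     = (cos (real k * (real d * pi / real N)) + cos (real k * (real (a + b) * pi / real N)))/2" for k
  proof -
    have "cos (real k * (real d * pi / real N)) = cos (real k * (real a * pi / real N) - real k * (real b * pi / real N))"
    proof (cases "a \<le> b")
      case True
      then have "real d = real b - real a" unfolding d_def by simp
      then have "real k * (real d * pi / real N) = real k * ((real b - real a) * pi / real N)" by simp
      also have "\<dots> = - (real k * (real a * pi / real N) - real k * (real b * pi / real N))"
        by (simp add: algebra_simps diff_divide_distrib)
      finally have "real k * (real d * pi / real N) = - (real k * (real a * pi / real N) - real k * (real b * pi / real N))" .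
      then show ?thesis by (simp only: cos_minus)
    next
      case False
      then have "real d = real a - real b" unfolding d_def by simp
      then have "real k * (real d * pi / real N) = real k * ((real a - real b) * pi / real N)" by simp
      also have "\<dots> = (real k * (real a * pi / real N) - real k * (real b * pi / real N))"
        by (simp add: algebra_simps diff_divide_distrib)
      finally have "real k * (real d * pi / real N) = (real k * (real a * pi / real N) - real k * (real b * pi / real N))" .
      then show ?thesis by simp
    qed
    moreover have "real k * (real (a+b) * pi / real N) = real k * (real a * pi / real N) + real k * (real b * pi / real N)"
      by (simp add: algebra_simps add_divide_distrib)
    ultimately show ?thesis by (simp add: cos_add cos_diff)
  qed
  have s2: "(\<Sum>k<N. cos (real k * (real (a + b) * pi / real N))) = (if even (a+b) then 0 else 1)"
    by (rule L1n) (use assms in auto)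
  have s1: "(\<Sum>k<N. cos (real k * (real d * pi / real N))) = (if a = b then real N else (if even (a+b) then 0 else 1))"
  proof (cases "a = b")
    case True then show ?thesis unfolding d_def by simp
  next
    case False
    have e: "even d = even (a + b)" unfolding d_def by auto
    have "(\<Sum>k<N. cos (real k * (real d * pi / real N))) = (if even d then 0 else 1)"
      by (rule L1n) (use assms False in \<open>auto simp: d_def\<close>)
    then show ?thesis using False e by simp
  qed
  have "(\<Sum>k<N. cos (real k * (real a * pi / real N)) * cos (real k * (real b * pi / real N)))
     = ((\<Sum>k<N. cos (real k * (real d * pi / real N))) + (\<Sum>k<N. cos (real k * (real (a + b) * pi / real N))))/2"
    unfolding pt by (simp add: sum_divide_distrib[symmetric] sum.distrib)
  also have "\<dots> = (if a = b then real N / 2 else 0) + (if even (a + b) then 0 else 1)"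
    unfolding s1 s2 by (cases "a = b"; cases "even (a + b)") (simp_all del: even_add)
  finally show ?thesis .
qed

lemma L3:
  fixes N a :: nat
  assumes "1 \<le> a" "a \<le> N - 1"
  shows "(\<Sum>k<N. cos (real k * (real a * pi / real N))) = (if even a then 0 else 1)"
  by (rule L1n) (use assms in auto)

lemma L4:
  fixes N a :: nat
  assumes "1 \<le> a" "a \<le> N - 1"
  shows "(\<Sum>k<N. (-1)^k * cos (real k * (real a * pi / real N))) = (if even (a + N) then 0 else 1)"
proof -
  have N: "N > 0" using assms by auto
  have pt: "(-1)^k * cos (real k * (real a * pi / real N)) = cos (real k * (real (a + N) * pi / real N))" for k
  proof -
    have "real k * (real (a + N) * pi / real N) = real k * (real a * pi / real N) + real k * pi"
      using N by (simp add: algebra_simps add_divide_distrib)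
    then show ?thesis by (simp add: cos_add cos_npi)
  qed
  show ?thesis unfolding pt
    by (rule L1n) (use assms in auto)
qed


lemma TRIG:
  fixes N a b :: nat
  assumes "N \<ge> 2" "1 \<le> a" "a \<le> N - 1" "1 \<le> b" "b \<le> N - 1"
  shows "(\<Sum>k=0..N-2. 2 / (cheb_c k * real N) *
           (cos (real k * (real b * pi / real N))
            - (1 - (-1) ^ (N + k)) / 2 * cos (real (N - 1) * (real b * pi / real N))
            - (1 + (-1) ^ (N + k)) / 2 * cos (real N * (real b * pi / real N)))
           * cos (real k * (real a * pi / real N))) = (if a = b then 1 else 0)"
proof -
  define ta where "ta = real a * pi / real N"
  define tb where "tb = real b * pi / real N"
  define C where "C = cos (real (N - 1) * tb)"
  define E where "E = cos (real N * tb)"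
  define g where "g k = (cos (real k * tb) - (1 - (-1) ^ (N + k)) / 2 * C - (1 + (-1) ^ (N + k)) / 2 * E) * cos (real k * ta)" for k
  obtain n where n: "N = Suc (Suc n)" using assms(1) by (metis add_2_eq_Suc le_Suc_ex)
  have Npos: "real N > 0" using n by simp
  have lhs: "(\<Sum>k=0..N-2. 2 / (cheb_c k * real N) *
           (cos (real k * (real b * pi / real N))
            - (1 - (-1) ^ (N + k)) / 2 * cos (real (N - 1) * (real b * pi / real N))
            - (1 + (-1) ^ (N + k)) / 2 * cos (real N * (real b * pi / real N)))
           * cos (real k * (real a * pi / real N))) = (\<Sum>k=0..N-2. 2 / (cheb_c k * real N) * g k)"
    unfolding g_def C_def E_def ta_def tb_def by (simp only: mult.assoc)
  have w: "(\<Sum>k=0..N-2. 2 / (cheb_c k * real N) * g k) = 2 / real N * (\<Sum>k=0..N-2. g k) - g 0 / real N"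
  proof -
    have "(\<Sum>k=0..N-2. 2 / (cheb_c k * real N) * g k) = (\<Sum>k=0..N-2. 2 / real N * g k - (if k = 0 then g 0 / real N else 0))"
      by (rule sum.cong) (auto simp: cheb_c_def)
    also have "\<dots> = 2 / real N * (\<Sum>k=0..N-2. g k) - g 0 / real N"
      by (simp add: sum_subtractf sum_distrib_left)
    finally show ?thesis .
  qed
  have sp: "(\<Sum>k<N. g k) = (\<Sum>k=0..N-2. g k) + g (N - 1)"
    unfolding n by (simp add: atLeast0AtMost lessThan_Suc_atMost[symmetric])
  have gN: "g (N - 1) = 0"
  proof -
    have "odd (N + (N - 1))" using n by simp
    then have "(-1::real) ^ (N + (N - 1)) = -1" by simp
    then show ?thesis unfolding g_def C_def by simp
  qed
  have pt: "g k = cos (real k * ta) * cos (real k * tb) + (-(C+E)/2) * cos (real k * ta)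
              + ((-1)^N * (C - E)/2) * ((-1)^k * cos (real k * ta))" for k
    unfolding g_def by (simp add: power_add algebra_simps diff_divide_distrib add_divide_distrib)
  have tot: "(\<Sum>k<N. g k) = (\<Sum>k<N. cos (real k * ta) * cos (real k * tb)) + (-(C+E)/2) * (\<Sum>k<N. cos (real k * ta))
     + ((-1)^N * (C - E)/2) * (\<Sum>k<N. (-1)^k * cos (real k * ta))"
    unfolding pt by (simp add: sum.distrib sum_distrib_left)
  have E: "E = (if even b then 1 else -1)"
  proof -
    have "real N * tb = real b * pi" unfolding tb_def using Npos by simp
    then show ?thesis unfolding E_def by (simp add: cos_npi)
  qed
  have g0: "g 0 = 1 - (1 - (-1)^N) / 2 * C - (1 + (-1)^N) / 2 * E" unfolding g_def by simp
  have sgn: "(-1::real)^N = (if even N then 1 else -1)" by simp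
  have main: "2 / real N * (\<Sum>k<N. g k) - g 0 / real N = (if a = b then 1 else 0)"
    unfolding tot L2[OF assms(2-5), folded ta_def tb_def] L3[OF assms(2,3), folded ta_def]
      L4[OF assms(2,3), folded ta_def] g0 E sgn
    using Npos
    by (cases "a = b"; cases "even a"; cases "even b"; cases "even N") (simp_all add: field_simps)
  show ?thesis unfolding lhs w using main sp gN by simp
qed

fun Tp :: "nat \<Rightarrow> real poly" where
  "Tp 0 = 1"
| "Tp (Suc 0) = [:0, 1:]"
| "Tp (Suc (Suc n)) = [:0, 2:] * Tp (Suc n) - Tp n"

lemma Tp_cos: "poly (Tp n) (cos t) = cos (real n * t)"
proof (induction n rule: Tp.induct)
  case 1 then show ?case by simp
next
  case 2 then show ?case by simp
next
  case (3 n)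
  have a: "cos (real (Suc (Suc n)) * t) = cos (real (Suc n) * t + t)" by (simp add: algebra_simps)
  have b: "cos (real n * t) = cos (real (Suc n) * t - t)" by (simp add: algebra_simps)
  show ?case using 3 unfolding a
    by (simp only: Tp.simps poly_diff poly_mult) (simp add: b cos_add cos_diff)
qed

lemma Tp_deg: "degree (Tp n) \<le> n"
proof (induction n rule: Tp.induct)
  case (3 n)
  have "degree ([:0, 2:] * Tp (Suc n)) \<le> Suc (Suc n)"
    using degree_mult_le[of "[:0, 2:]" "Tp (Suc n)"] 3 by simp
  then show ?case using 3 by (simp add: degree_diff_le)
qed auto

lemma cheb_poly: "-1 \<le> x \<Longrightarrow> x \<le> 1 \<Longrightarrow> cheb k x = poly (Tp k) x"
  unfolding cheb_def using Tp_cos[of k "arccos x"] by (simp add: cos_arccos)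

lemma pderiv_sum': "pderiv (sum f A) = (\<Sum>x\<in>A. pderiv (f x))"
  using higher_pderiv_sum[of 1 f A] by simp

lemma anti_ex: "\<exists>q. pderiv q = p \<and> poly q (-1) = (0::real)"
proof -
  define q0 where "q0 = (\<Sum>i\<le>degree p. monom (coeff p i / real (Suc i)) (Suc i))"
  have "pderiv q0 = (\<Sum>i\<le>degree p. monom (coeff p i) i)"
    unfolding q0_def by (simp add: pderiv_sum' pderiv_monom)
  also have "\<dots> = p" by (rule poly_as_sum_of_monoms)
  finally have d: "pderiv q0 = p" .
  show ?thesis
    by (rule exI[of _ "q0 - [:poly q0 (-1):]"]) (simp add: d pderiv_diff)
qed

definition anti :: "real poly \<Rightarrow> real poly" where
  "anti p = (SOME q. pderiv q = p \<and> poly q (-1) = 0)"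

lemma anti: "pderiv (anti p) = p" "poly (anti p) (-1) = 0"
  using someI_ex[OF anti_ex[of p]] unfolding anti_def by auto

lemma integral_poly:
  assumes "-1 \<le> x"
  shows "integral {-1..x} (poly p) = poly (anti p) x"
proof -
  have "(poly p has_integral poly (anti p) x - poly (anti p) (-1)) {-1..x}"
  proof (rule fundamental_theorem_of_calculus[OF assms])
    fix t assume "t \<in> {-1..x}"
    have "(poly (anti p) has_real_derivative poly (pderiv (anti p)) t) (at t)" by (rule poly_DERIV)
    then show "(poly (anti p) has_vector_derivative poly p t) (at t within {-1..x})"
      by (simp add: anti has_real_derivative_iff_has_vector_derivative has_vector_derivative_at_within)
  qed
  then show ?thesis using anti(2) by (simp add: integral_unique)
qed

lemma cheb_int1_poly:
  assumes "-1 \<le> x" "x \<le> 1"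
  shows "cheb_int1 k x = poly (anti (Tp k)) x"
proof -
  have "integral {-1..x} (cheb k) = integral {-1..x} (poly (Tp k))"
    by (rule integral_cong) (use assms in \<open>auto intro: cheb_poly\<close>)
  then show ?thesis unfolding cheb_int1_def using integral_poly[OF assms(1)] by simp
qed

lemma cheb_int2_poly:
  assumes "-1 \<le> x" "x \<le> 1"
  shows "cheb_int2 k x = poly (anti (anti (Tp k))) x"
proof -
  have "integral {-1..x} (cheb_int1 k) = integral {-1..x} (poly (anti (Tp k)))"
    by (rule integral_cong) (use assms in \<open>auto intro: cheb_int1_poly\<close>)
  then show ?thesis unfolding cheb_int2_def using integral_poly[OF assms(1)] by simp
qed

lemma node_arccos:
  assumes "N > 0" "i \<le> N"
  shows "arccos (cgl_node N i) = real (N - i) * pi / real N"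
proof -
  have r: "0 \<le> real i * pi / real N" "real i * pi / real N \<le> pi"
    using assms by (auto simp: field_simps)
  have "arccos (cgl_node N i) = pi - real i * pi / real N"
    unfolding cgl_node_def using arccos_minus[of "cos (real i * pi / real N)"] arccos_cos[OF r] by simp
  also have "\<dots> = real (N - i) * pi / real N" using assms by (simp add: field_simps of_nat_diff)
  finally show ?thesis .
qed

lemma node_cheb:
  assumes "N > 0" "i \<le> N"
  shows "cheb k (cgl_node N i) = cos (real k * (real (N - i) * pi / real N))"
  unfolding cheb_def node_arccos[OF assms] ..

lemma node_range: "-1 \<le> cgl_node N i \<and> cgl_node N i \<le> 1"
  unfolding cgl_node_def by simp

lemma node_inj:
  assumes "N > 0" shows "inj_on (cgl_node N) {..N}"
proof
  fix i j assume "i \<in> {..N}" "j \<in> {..N}" "cgl_node N i = cgl_node N j"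
  then have "arccos (cgl_node N i) = arccos (cgl_node N j)" by simp
  then have "real (N - i) * pi / real N = real (N - j) * pi / real N"
    using node_arccos assms \<open>i \<in> {..N}\<close> \<open>j \<in> {..N}\<close> by simp
  then have "real (N - i) = real (N - j)" using assms by simp
  then show "i = j" using \<open>i \<in> {..N}\<close> \<open>j \<in> {..N}\<close> by simp
qed

theorem proposition3p4:
  fixes N j :: nat and B :: "real poly"
  assumes "N \<ge> 2" and "1 \<le> j" and "j \<le> N - 1"
    and "degree B \<le> N"
    and "poly B (-1) = 0" and "poly B 1 = 0"
    and "\<And>i. 1 \<le> i \<Longrightarrow> i \<le> N - 1 \<Longrightarrow>
           poly (pderiv (pderiv B)) (cgl_node N i) = (if i = j then 1 else 0)"
  shows "\<forall>x\<in>{-1..1::real}.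
           poly B x = (\<Sum>k=0..N-2. beta_coef N k j *
              (cheb_int2 k x - (1 + x) / 2 * cheb_int2 k 1))
         \<and> poly (pderiv B) x = (\<Sum>k=0..N-2. beta_coef N k j *
              (cheb_int1 k x - cheb_int2 k 1 / 2))"
proof -
  have N0: "N > 0" using assms(1) by simp
  define \<beta> where "\<beta> k = beta_coef N k j" for k
  define Q where "Q = (\<Sum>k=0..N-2. smult (\<beta> k) (Tp k))"
  define P1 where "P1 = (\<Sum>k=0..N-2. smult (\<beta> k) (anti (Tp k)))"
  define P2 where "P2 = (\<Sum>k=0..N-2. smult (\<beta> k) (anti (anti (Tp k))))"
  have dP2: "pderiv P2 = P1" unfolding P2_def P1_def by (simp add: pderiv_sum' pderiv_smult anti)
  have dP1: "pderiv P1 = Q" unfolding Q_def P1_def by (simp add: pderiv_sum' pderiv_smult anti)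
  have Qval: "poly Q (cgl_node N i) = (if i = j then 1 else 0)" if i: "1 \<le> i" "i \<le> N - 1" for i
  proof -
    have "poly Q (cgl_node N i) = (\<Sum>k=0..N-2. \<beta> k * cheb k (cgl_node N i))"
      unfolding Q_def poly_sum poly_smult using node_range[of N i] by (simp add: cheb_poly)
    also have "\<dots> = (\<Sum>k=0..N-2. 2 / (cheb_c k * real N) *
           (cos (real k * (real (N - j) * pi / real N))
            - (1 - (-1) ^ (N + k)) / 2 * cos (real (N - 1) * (real (N - j) * pi / real N))
            - (1 + (-1) ^ (N + k)) / 2 * cos (real N * (real (N - j) * pi / real N)))
           * cos (real k * (real (N - i) * pi / real N)))"
      unfolding \<beta>_def beta_coef_def using N0 i assms(2,3) by (simp add: node_cheb)
    also have "\<dots> = (if N - i = N - j then 1 else 0)"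
      by (rule TRIG) (use assms(1-3) i in auto)
    also have "\<dots> = (if i = j then 1 else 0)" using i assms(2,3) by auto
    finally show ?thesis .
  qed
  have B2: "pderiv (pderiv B) = Q"
  proof (rule ccontr)
    define D where "D = pderiv (pderiv B) - Q"
    assume "pderiv (pderiv B) \<noteq> Q"
    then have D0: "D \<noteq> 0" unfolding D_def by simp
    have "degree (pderiv (pderiv B)) \<le> N - 2" using assms(4) by (simp add: degree_pderiv)
    moreover have "degree Q \<le> N - 2" unfolding Q_def
      by (rule degree_sum_le) (auto intro: order.trans[OF degree_smult_le] order.trans[OF Tp_deg])
    ultimately have dD: "degree D \<le> N - 2" unfolding D_def by (meson degree_diff_le)
    have sub: "cgl_node N ` {1..N-1} \<subseteq> {x. poly D x = 0}"
      using Qval assms(7) unfolding D_def by auto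
    have "card (cgl_node N ` {1..N-1}) = N - 1"
      by (subst card_image[OF inj_on_subset[OF node_inj[OF N0]]]) auto
    moreover have "card (cgl_node N ` {1..N-1}) \<le> card {x. poly D x = 0}"
      by (rule card_mono[OF poly_roots_finite[OF D0] sub])
    ultimately have "N - 1 \<le> degree D" using card_poly_roots_bound[OF D0] by linarith
    with dD assms(1) show False by linarith
  qed
  define L where "L = B - P2 + smult (poly P2 1 / 2) [:1, 1:]"
  have "pderiv (pderiv L) = 0"
    unfolding L_def by (simp add: pderiv_diff pderiv_add pderiv_smult pderiv_pCons B2 dP2 dP1)
  then obtain h where h: "pderiv L = [:h:]" using pderiv_iszero by blast
  have "pderiv (L - [:0, h:]) = 0" by (simp add: pderiv_diff h pderiv_pCons)
  then obtain c where c: "L - [:0, h:] = [:c:]" using pderiv_iszero by blast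
  then have "L = [:c:] + [:0, h:]" by (metis diff_add_cancel)
  then have Lc: "L = [:c, h:]" by simp
  have P2m1: "poly P2 (-1) = 0" unfolding P2_def poly_sum by (simp add: anti)
  have "poly L (-1) = 0" unfolding L_def using assms(5) P2m1 by simp
  moreover have "poly L 1 = 0" unfolding L_def using assms(6) by simp
  ultimately have ch: "c = 0" "h = 0" unfolding Lc by simp_all
  have L0: "L = 0" using Lc ch by simp
  have h0: "pderiv L = 0" using h ch by simp
  show ?thesis
  proof
    fix x :: real assume x: "x \<in> {-1..1}"
    then have x1: "-1 \<le> x" "x \<le> 1" by auto
    have e2: "poly P2 x = (\<Sum>k=0..N-2. \<beta> k * cheb_int2 k x)"
      unfolding P2_def poly_sum poly_smult using x1 by (simp add: cheb_int2_poly)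
    have e21: "poly P2 1 = (\<Sum>k=0..N-2. \<beta> k * cheb_int2 k 1)"
      unfolding P2_def poly_sum poly_smult by (simp add: cheb_int2_poly)
    have e1: "poly P1 x = (\<Sum>k=0..N-2. \<beta> k * cheb_int1 k x)"
      unfolding P1_def poly_sum poly_smult using x1 by (simp add: cheb_int1_poly)
    have pB: "poly B x = poly P2 x - (1 + x) / 2 * poly P2 1"
      using arg_cong[OF L0, of "\<lambda>p. poly p x"] unfolding L_def by (simp add: algebra_simps add_divide_distrib)
    have pB': "poly (pderiv B) x = poly P1 x - poly P2 1 / 2"
      using arg_cong[OF h0, of "\<lambda>p. poly p x"] unfolding L_def
      by (simp add: pderiv_diff pderiv_add pderiv_smult pderiv_pCons dP2 algebra_simps)
    have r1: "(\<Sum>k=0..N-2. beta_coef N k j * (cheb_int2 k x - (1 + x) / 2 * cheb_int2 k 1))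
       = (\<Sum>k=0..N-2. \<beta> k * cheb_int2 k x) - (1 + x) / 2 * (\<Sum>k=0..N-2. \<beta> k * cheb_int2 k 1)"
      unfolding \<beta>_def by (simp add: sum_subtractf sum_distrib_left algebra_simps)
    have r2: "(\<Sum>k=0..N-2. beta_coef N k j * (cheb_int1 k x - cheb_int2 k 1 / 2))
       = (\<Sum>k=0..N-2. \<beta> k * cheb_int1 k x) - (\<Sum>k=0..N-2. \<beta> k * cheb_int2 k 1) / 2"
      unfolding \<beta>_def by (simp add: sum_subtractf sum_divide_distrib algebra_simps)
    show "poly B x = (\<Sum>k=0..N-2. beta_coef N k j * (cheb_int2 k x - (1 + x) / 2 * cheb_int2 k 1))
         \<and> poly (pderiv B) x = (\<Sum>k=0..N-2. beta_coef N k j * (cheb_int1 k x - cheb_int2 k 1 / 2))"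
      unfolding r1 r2 pB pB' e1 e2 e21 by simp
  qed
qed

end
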